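(* Let $\alpha:\mathbb{C}\to\mathbb{C}$ be an exponential automorphism, i.e. a function satisfying $\alpha(z_1+z_2)=\alpha(z_1)+\alpha(z_2)$ and $\alpha(e^z)=e^{\alpha(z)}$ for all $z,z_1,z_2\in\mathbb{C}$. Let $r$ be a positive rational number, let $k$ be a positive integer, and let $r^{1/k}$ denote the positive real $k$th root of $r$. Then $\alpha(r^{1/k})=\zeta r^{1/k}$ for some $k$th root of unity $\zeta$. *)

theory Defs
  imports Complex_Main
begin

definition exponential_automorphism :: "(complex \<Rightarrow> complex) \<Rightarrow> bool" where
  "exponential_automorphism \<alpha> \<longleftrightarrow>
     (\<forall>z1 z2. \<alpha> (z1 + z2) = \<alpha> z1 + \<alpha> z2) \<and> (\<forall>z. \<alpha> (exp z) = exp (\<alpha> z))"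

end

theory Submission
  imports Defs "HOL-Analysis.Analysis"
begin

theorem mainTheorem4:
  fixes \<alpha> :: "complex \<Rightarrow> complex" and r :: rat and k :: nat
  assumes "exponential_automorphism \<alpha>"
    and "r > 0" and "k > 0"
  shows "\<exists>\<zeta>::complex. \<zeta> ^ k = 1 \<and>
           \<alpha> (complex_of_real (root k (of_rat r))) = \<zeta> * complex_of_real (root k (of_rat r))"
proof -
  have add: "\<And>a b. \<alpha> (a + b) = \<alpha> a + \<alpha> b" and ex: "\<And>z. \<alpha> (exp z) = exp (\<alpha> z)"
    using assms(1) unfolding exponential_automorphism_def by auto
  have z0: "\<alpha> 0 = 0" using add[of 0 0] by simp
  have one: "\<alpha> 1 = 1" using ex[of 0] z0 by simp
  have mult: "\<alpha> (a * b) = \<alpha> a * \<alpha> b" for a b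
  proof (cases "a = 0 \<or> b = 0")
    case True then show ?thesis using z0 by auto
  next
    case False
    then have "a * b = exp (Ln a + Ln b)" by (simp add: exp_add)
    then have "\<alpha> (a * b) = exp (\<alpha> (Ln a) + \<alpha> (Ln b))" using ex add by simp
    also have "\<dots> = \<alpha> (exp (Ln a)) * \<alpha> (exp (Ln b))" using ex by (simp add: exp_add)
    also have "\<dots> = \<alpha> a * \<alpha> b" using False by simp
    finally show ?thesis .
  qed
  have nat: "\<alpha> (of_nat n) = of_nat n" for n
    by (induction n) (simp_all add: z0 add one)
  have pw: "\<alpha> (x ^ n) = \<alpha> x ^ n" for x n
    by (induction n) (simp_all add: one mult)
  obtain a b where q: "quotient_of r = (a, b)" by (cases "quotient_of r")
  have rab: "r = of_int a / of_int b" and b0: "b > 0"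
    using quotient_of_div[OF q] quotient_of_denom_pos[OF q] by auto
  have a0: "a > 0" using assms(2) rab b0
  proof -
    have "(0::rat) < of_int a / of_int b" using assms(2) rab by simp
    then show ?thesis using b0 by (simp add: zero_less_divide_iff)
  qed
  have rc: "(of_rat r :: complex) = of_nat (nat a) / of_nat (nat b)"
    using rab a0 b0 by (simp add: of_rat_divide)
  have ar: "\<alpha> (of_rat r) = of_rat r"
  proof -
    have bne: "(of_nat (nat b) :: complex) \<noteq> 0" using b0 by simp
    have "\<alpha> (of_nat (nat b) * (of_nat (nat a) / of_nat (nat b))) = of_nat (nat a)"
      using bne nat by simp
    then have "of_nat (nat b) * \<alpha> (of_nat (nat a) / of_nat (nat b)) = of_nat (nat a)"
      using mult[of "of_nat (nat b)" "of_nat (nat a) / of_nat (nat b)"] nat[of "nat b"] by simp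
    then have "\<alpha> (of_nat (nat a) / of_nat (nat b)) = of_nat (nat a) / of_nat (nat b)"
      using bne by (simp add: eq_divide_eq mult.commute)
    then show ?thesis unfolding rc .
  qed
  define x where "x = complex_of_real (root k (of_rat r))"
  have xpos: "root k (of_rat r :: real) > 0" using assms(2,3) by simp
  have x0: "x \<noteq> 0" unfolding x_def using xpos by simp
  have xk: "x ^ k = of_rat r"
  proof -
    have "root k (of_rat r :: real) ^ k = of_rat r" using assms(2,3) by simp
    then have "complex_of_real (root k (of_rat r) ^ k) = complex_of_real (of_rat r)" by simp
    then show ?thesis unfolding x_def by (simp add: rab of_rat_divide)
  qed
  have "\<alpha> x ^ k = x ^ k" using pw[of x k] xk ar by simp
  then have "(\<alpha> x / x) ^ k = 1" using x0 by (simp add: power_divide)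
  moreover have "\<alpha> x = (\<alpha> x / x) * x" using x0 by simp
  ultimately show ?thesis unfolding x_def by blast
qed

end
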